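(* Let $Q=(M,\Omega)$ be a $2$-sheltering matroid on ground set $U$ such that the multimatroid $\mathcal Z(Q)$ is tight, and suppose $M$ is representable over a field $\mathbb F$. Then $r(M)=|\Omega|$ (so $Q$ is strict). Moreover, if $B$ is a basis of $M$ that is a transversal of $\Omega$ and $T=U\setminus B$ (a transversal), then for every standard $\mathbb F$-representation $(I\mid A)$ of $M$ with respect to $B$ (identity columns indexed by $B$, columns of $A$ indexed by $T$), the matrix $A$ is zero-diagonal, i.e. $A_{b,t}=0$ whenever $\{b,t\}\in\Omega$. If $\mathbb F=GF(2)$, then $A$ is in addition symmetric, i.e. $A_{b,t}=A_{b',t'}$ whenever $\{b,t'\},\{b',t\}\in\Omega$.
   Context: Let $\Omega$ be a partition of a finite set $U$; a subtransversal (transversal) meets every class in at most (exactly) one element. A sheltering matroid is a pair $Q=(M,\Omega)$ with $M$ a matroid on $U$ such that for every independent subtransversal $I$ of $M$ and every $2$-element subset $\{x,y\}$ of a class $\omega$ with $\omega\cap I=\emptyset$, $I\cup\{x\}$ or $I\cup\{y\}$ is independent in $M$; it is a $2$-sheltering matroid if all classes have size $2$, and strict if $r(M)\le|\Omega|$. $\mathcal Z(Q)$ is the multimatroid on $(U,\Omega)$ whose independent sets are the independent subtransversals of $M$. $\mathcal Z(Q)$ is tight if every class has size $>1$ and for every subtransversal $S$ with $|S|=|\Omega|-1$, letting $\omega$ be the class disjoint from $S$, there is $x\in\omega$ with $r_M(S\cup\{x\})=r_M(S)$. *)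

theory Defs
  imports Main "HOL-Library.Disjoint_Sets"
begin

definition matroid :: "'a set \<Rightarrow> ('a set \<Rightarrow> bool) \<Rightarrow> bool" where
  "matroid U indep \<longleftrightarrow> finite U \<and> indep {} \<and>
     (\<forall>X. indep X \<longrightarrow> X \<subseteq> U) \<and>
     (\<forall>X Y. indep Y \<and> X \<subseteq> Y \<longrightarrow> indep X) \<and>
     (\<forall>X Y. indep X \<and> indep Y \<and> card X < card Y \<longrightarrow>
        (\<exists>y\<in>Y - X. indep (insert y X)))"

definition mrank :: "('a set \<Rightarrow> bool) \<Rightarrow> 'a set \<Rightarrow> nat" where
  "mrank indep X = Max (card ` {I. I \<subseteq> X \<and> indep I})"

definition mbasis :: "'a set \<Rightarrow> ('a set \<Rightarrow> bool) \<Rightarrow> 'a set \<Rightarrow> bool" where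
  "mbasis U indep B \<longleftrightarrow> indep B \<and> (\<forall>X. indep X \<and> B \<subseteq> X \<longrightarrow> X = B)"

definition subtransversal :: "'a set set \<Rightarrow> 'a set \<Rightarrow> bool" where
  "subtransversal \<Omega> S \<longleftrightarrow> S \<subseteq> \<Union>\<Omega> \<and> (\<forall>\<omega>\<in>\<Omega>. card (S \<inter> \<omega>) \<le> 1)"

definition transversal :: "'a set set \<Rightarrow> 'a set \<Rightarrow> bool" where
  "transversal \<Omega> S \<longleftrightarrow> S \<subseteq> \<Union>\<Omega> \<and> (\<forall>\<omega>\<in>\<Omega>. card (S \<inter> \<omega>) = 1)"

definition sheltering :: "'a set \<Rightarrow> ('a set \<Rightarrow> bool) \<Rightarrow> 'a set set \<Rightarrow> bool" where
  "sheltering U indep \<Omega> \<longleftrightarrow> matroid U indep \<and> partition_on U \<Omega> \<and>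
     (\<forall>I \<omega> x y. indep I \<and> subtransversal \<Omega> I \<and> \<omega> \<in> \<Omega> \<and> \<omega> \<inter> I = {} \<and>
        x \<in> \<omega> \<and> y \<in> \<omega> \<and> x \<noteq> y \<longrightarrow> indep (insert x I) \<or> indep (insert y I))"

definition two_sheltering :: "'a set \<Rightarrow> ('a set \<Rightarrow> bool) \<Rightarrow> 'a set set \<Rightarrow> bool" where
  "two_sheltering U indep \<Omega> \<longleftrightarrow> sheltering U indep \<Omega> \<and> (\<forall>\<omega>\<in>\<Omega>. card \<omega> = 2)"

definition strict_sheltering :: "'a set \<Rightarrow> ('a set \<Rightarrow> bool) \<Rightarrow> 'a set set \<Rightarrow> bool" where
  "strict_sheltering U indep \<Omega> \<longleftrightarrow> sheltering U indep \<Omega> \<and> mrank indep U \<le> card \<Omega>"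

text \<open>Tightness of the multimatroid Z(Q): its rank function on subtransversals is that of M.\<close>
definition Z_tight :: "'a set \<Rightarrow> ('a set \<Rightarrow> bool) \<Rightarrow> 'a set set \<Rightarrow> bool" where
  "Z_tight U indep \<Omega> \<longleftrightarrow> (\<forall>\<omega>\<in>\<Omega>. card \<omega> > 1) \<and>
     (\<forall>S \<omega>. subtransversal \<Omega> S \<and> card S = card \<Omega> - 1 \<and> \<omega> \<in> \<Omega> \<and> \<omega> \<inter> S = {} \<longrightarrow>
        (\<exists>x\<in>\<omega>. mrank indep (insert x S) = mrank indep S))"

definition cols_indep :: "'r set \<Rightarrow> ('r \<Rightarrow> 'a \<Rightarrow> 'f::field) \<Rightarrow> 'a set \<Rightarrow> bool" where
  "cols_indep R D X \<longleftrightarrow> finite X \<and>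
     (\<forall>c. (\<forall>r\<in>R. (\<Sum>x\<in>X. c x * D r x) = 0) \<longrightarrow> (\<forall>x\<in>X. c x = 0))"

definition represents :: "'r set \<Rightarrow> ('r \<Rightarrow> 'a \<Rightarrow> 'f::field) \<Rightarrow> 'a set \<Rightarrow> ('a set \<Rightarrow> bool) \<Rightarrow> bool" where
  "represents R D U indep \<longleftrightarrow> finite R \<and> (\<forall>X\<subseteq>U. indep X \<longleftrightarrow> cols_indep R D X)"

definition representable_over :: "'f::field itself \<Rightarrow> 'a set \<Rightarrow> ('a set \<Rightarrow> bool) \<Rightarrow> bool" where
  "representable_over F U indep \<longleftrightarrow>
     (\<exists>m (D :: nat \<Rightarrow> 'a \<Rightarrow> 'f). represents {..<m} D U indep)"

text \<open>The matrix (I | A) with rows indexed by B and columns indexed by U: identity on B,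
  columns of A on U - B.\<close>
definition std_matrix :: "'a set \<Rightarrow> ('a \<Rightarrow> 'a \<Rightarrow> 'f::field) \<Rightarrow> 'a \<Rightarrow> 'a \<Rightarrow> 'f" where
  "std_matrix B A b u = (if u \<in> B then (if u = b then 1 else 0) else A b u)"

end

theory Submission
  imports Defs
begin

lemma mrank_ge:
  assumes "finite Y" "I \<subseteq> Y" "indep I"
  shows "card I \<le> mrank indep Y"
  unfolding mrank_def
proof (rule Max_ge)
  have "{I. I \<subseteq> Y \<and> indep I} \<subseteq> Pow Y" by auto
  then show "finite (card ` {I. I \<subseteq> Y \<and> indep I})"
    using assms(1) finite_subset by blast
  show "card I \<in> card ` {I. I \<subseteq> Y \<and> indep I}" using assms by auto
qed

lemma mrank_le:
  assumes "finite Y" "indep {}" "\<And>I. I \<subseteq> Y \<Longrightarrow> indep I \<Longrightarrow> card I \<le> k"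
  shows "mrank indep Y \<le> k"
  unfolding mrank_def
proof (rule Max.boundedI)
  have "{I. I \<subseteq> Y \<and> indep I} \<subseteq> Pow Y" by auto
  then show "finite (card ` {I. I \<subseteq> Y \<and> indep I})"
    using assms(1) finite_subset by blast
  show "card ` {I. I \<subseteq> Y \<and> indep I} \<noteq> {}" using assms(2) by auto
  show "\<And>a. a \<in> card ` {I. I \<subseteq> Y \<and> indep I} \<Longrightarrow> a \<le> k" using assms(3) by auto
qed

lemma mrank_indep:
  assumes "finite X" "indep X" "indep {}"
  shows "mrank indep X = card X"
proof (rule antisym)

  show "mrank indep X \<le> card X"
    by (rule mrank_le[OF assms(1)]) (use assms in \<open>auto intro: card_mono\<close>)
  show "card X \<le> mrank indep X" by (rule mrank_ge) (use assms in auto)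
qed

lemma mrank_dep:
  assumes "finite Y" "indep {}" "\<not> indep Y"
  shows "mrank indep Y < card Y"
proof -
  have "Y \<noteq> {}" using assms by auto
  then have "card Y > 0" using assms(1) by auto
  have "mrank indep Y \<le> card Y - 1"
  proof (rule mrank_le[where indep=indep, OF assms(1,2)])
    fix I assume "I \<subseteq> Y" "indep I"
    then have "I \<subset> Y" using assms(3) by auto
    then have "card I < card Y" using assms(1) psubset_card_mono by blast
    then show "card I \<le> card Y - 1" by simp
  qed
  then show ?thesis using \<open>card Y > 0\<close> by simp
qed

lemma std_row:
  fixes A :: "'a \<Rightarrow> 'a \<Rightarrow> 'f::field"
  assumes "finite K" "K \<subseteq> B" "t \<notin> B"
  shows "(\<Sum>x\<in>insert t K. c x * std_matrix B A r x) = c t * A r t + (if r \<in> K then c r else 0)"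
proof -
  have tK: "t \<notin> K" using assms by auto
  have "(\<Sum>x\<in>K. c x * std_matrix B A r x) = (\<Sum>x\<in>K. if x = r then c x else 0)"
    by (rule sum.cong) (use assms in \<open>auto simp: std_matrix_def\<close>)
  also have "\<dots> = (if r \<in> K then c r else 0)" using assms(1) by (simp add: sum.delta)
  finally show ?thesis using tK assms by (simp add: std_matrix_def)
qed

lemma std_dep:
  fixes A :: "'a \<Rightarrow> 'a \<Rightarrow> 'f::field"
  assumes "finite B" "K \<subseteq> B" "t \<notin> B" "\<forall>r\<in>B - K. A r t = 0"
  shows "\<not> cols_indep B (std_matrix B A) (insert t K)"
proof
  assume ci: "cols_indep B (std_matrix B A) (insert t K)"
  have fK: "finite K" using assms finite_subset by blast
  define c where "c = (\<lambda>x. if x = t then (1::'f) else - A x t)"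
  have "\<forall>r\<in>B. (\<Sum>x\<in>insert t K. c x * std_matrix B A r x) = 0"
  proof
    fix r assume "r \<in> B"
    have "c t = 1" by (simp add: c_def)
    moreover have "r \<in> K \<Longrightarrow> c r = - A r t" using assms(2,3) \<open>r \<in> B\<close> by (auto simp: c_def)
    ultimately show "(\<Sum>x\<in>insert t K. c x * std_matrix B A r x) = 0"
      using std_row[OF fK assms(2,3), of c A r] assms(4) \<open>r \<in> B\<close> by auto
  qed
  then have "c t = 0" using ci unfolding cols_indep_def by blast
  then show False by (simp add: c_def)
qed

lemma std_ind:
  fixes A :: "'a \<Rightarrow> 'a \<Rightarrow> 'f::field"
  assumes "finite B" "K \<subseteq> B" "t \<notin> B" "b \<in> B" "b \<notin> K" "A b t \<noteq> 0"
  shows "cols_indep B (std_matrix B A) (insert t K)"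
  unfolding cols_indep_def
proof (intro conjI allI impI ballI)
  have fK: "finite K" using assms finite_subset by blast
  then show "finite (insert t K)" by simp
  fix c x
  assume H: "\<forall>r\<in>B. (\<Sum>x\<in>insert t K. c x * std_matrix B A r x) = 0" and x: "x \<in> insert t K"
  have "c t * A b t = 0" using H[rule_format, OF assms(4)] std_row[OF fK assms(2,3), of c A b] assms(5) by simp
  then have ct: "c t = 0" using assms(6) by simp
  show "c x = 0"
  proof (cases "x = t")
    case True then show ?thesis using ct by simp
  next
    case False
    then have "x \<in> K" using x by simp
    then have "x \<in> B" using assms(2) by auto
    then show ?thesis using H[rule_format, OF \<open>x \<in> B\<close>] std_row[OF fK assms(2,3), of c A x] ct \<open>x \<in> K\<close> by simp
  qed
qed

lemma transversal_card:
  assumes "partition_on U \<Omega>" "finite U" "transversal \<Omega> I"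
  shows "card I = card \<Omega>"
proof -
  have UU: "U = \<Union>\<Omega>" using partition_onD1[OF assms(1)] .
  have fO: "finite \<Omega>" using assms(2) UU by (simp add: finite_UnionD)
  have IU: "I \<subseteq> \<Union>\<Omega>" and c1: "\<forall>\<omega>\<in>\<Omega>. card (I \<inter> \<omega>) = 1" using assms(3) by (auto simp: transversal_def)
  have "I = (\<Union>\<omega>\<in>\<Omega>. I \<inter> \<omega>)" using IU by auto
  moreover have "card (\<Union>\<omega>\<in>\<Omega>. I \<inter> \<omega>) = (\<Sum>\<omega>\<in>\<Omega>. card (I \<inter> \<omega>))"
  proof (rule card_UN_disjoint[OF fO])
    show "\<forall>\<omega>\<in>\<Omega>. finite (I \<inter> \<omega>)" using c1 by (metis card.infinite zero_neq_one)
    show "\<forall>i\<in>\<Omega>. \<forall>j\<in>\<Omega>. i \<noteq> j \<longrightarrow> I \<inter> i \<inter> (I \<inter> j) = {}"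
      using disjointD[OF partition_onD2[OF assms(1)]] by blast
  qed
  ultimately show ?thesis using c1 by simp
qed

theorem proposition2p7:
  fixes U :: "'a set" and indep :: "'a set \<Rightarrow> bool" and \<Omega> :: "'a set set"
  assumes "two_sheltering U indep \<Omega>"
    and "Z_tight U indep \<Omega>"
    and "representable_over TYPE('f::field) U indep"
  shows "mrank indep U = card \<Omega> \<and>
    (\<forall>B (A :: 'a \<Rightarrow> 'a \<Rightarrow> 'f). mbasis U indep B \<and> transversal \<Omega> B \<and>
        represents B (std_matrix B A) U indep \<longrightarrow>
      (\<forall>b\<in>B. \<forall>t\<in>U - B. {b, t} \<in> \<Omega> \<longrightarrow> A b t = 0) \<and>
      (card (UNIV :: 'f set) = 2 \<longrightarrow>
        (\<forall>b\<in>B. \<forall>b'\<in>B. \<forall>t\<in>U - B. \<forall>t'\<in>U - B.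
           {b, t'} \<in> \<Omega> \<and> {b', t} \<in> \<Omega> \<longrightarrow> A b t = A b' t')))"
proof -
  have sh: "sheltering U indep \<Omega>" and two: "\<forall>\<omega>\<in>\<Omega>. card \<omega> = 2"
    using assms(1) by (auto simp: two_sheltering_def)
  have mat: "matroid U indep" and part: "partition_on U \<Omega>"
    and shel: "\<forall>I \<omega> x y. indep I \<and> subtransversal \<Omega> I \<and> \<omega> \<in> \<Omega> \<and> \<omega> \<inter> I = {} \<and>
        x \<in> \<omega> \<and> y \<in> \<omega> \<and> x \<noteq> y \<longrightarrow> indep (insert x I) \<or> indep (insert y I)"
    using sh by (auto simp: sheltering_def)
  have finU: "finite U" and ind0: "indep {}" and indU: "\<And>X. indep X \<Longrightarrow> X \<subseteq> U"
    and down: "\<And>X Y. indep Y \<Longrightarrow> X \<subseteq> Y \<Longrightarrow> indep X"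
    and aug: "\<And>X Y. indep X \<Longrightarrow> indep Y \<Longrightarrow> card X < card Y \<Longrightarrow> \<exists>y\<in>Y - X. indep (insert y X)"
    using mat unfolding matroid_def by blast+
  have tight: "\<And>S \<omega>. subtransversal \<Omega> S \<Longrightarrow> card S = card \<Omega> - 1 \<Longrightarrow> \<omega> \<in> \<Omega> \<Longrightarrow> \<omega> \<inter> S = {} \<Longrightarrow>
        (\<exists>x\<in>\<omega>. mrank indep (insert x S) = mrank indep S)"
    using assms(2) unfolding Z_tight_def by blast
  have UU: "\<Union>\<Omega> = U" using partition_onD1[OF part] by (rule sym)
  have cls: "\<And>\<omega>1 \<omega>2 x. \<omega>1 \<in> \<Omega> \<Longrightarrow> \<omega>2 \<in> \<Omega> \<Longrightarrow> x \<in> \<omega>1 \<Longrightarrow> x \<in> \<omega>2 \<Longrightarrow> \<omega>1 = \<omega>2"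
    by (metis disjointD[OF partition_onD2[OF part]] disjoint_iff)
  have finS: "\<And>X. X \<subseteq> U \<Longrightarrow> finite X" using finU finite_subset by blast
  have pair: "\<And>\<omega> p q. \<omega> \<in> \<Omega> \<Longrightarrow> p \<in> \<omega> \<Longrightarrow> q \<in> \<omega> \<Longrightarrow> p \<noteq> q \<Longrightarrow> \<omega> = {p, q}"
  proof -
    fix \<omega> p q assume a: "\<omega> \<in> \<Omega>" "p \<in> \<omega>" "q \<in> \<omega>" "p \<noteq> q"
    have "\<omega> \<subseteq> U" using UU a(1) by blast
    then have f: "finite \<omega>" by (rule finS)
    have s: "{p,q} \<subseteq> \<omega>" using a by simp
    have c: "card {p,q} = card \<omega>" using a two by simp
    show "\<omega> = {p, q}" using card_subset_eq[OF f s c] by simp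
  qed
  have mind: "\<And>X. indep X \<Longrightarrow> mrank indep X = card X"
  proof -
    fix X assume X: "indep X"
    show "mrank indep X = card X" by (rule mrank_indep[OF finS[OF indU[OF X]] X ind0])
  qed
  have trcard: "\<And>I. transversal \<Omega> I \<Longrightarrow> card I = card \<Omega>"
    using transversal_card[OF part finU] by blast
  have trU: "\<And>I. transversal \<Omega> I \<Longrightarrow> I \<subseteq> U" using UU by (auto simp: transversal_def)
  have key: "\<And>I t \<omega>. transversal \<Omega> I \<Longrightarrow> t \<in> I \<Longrightarrow> \<omega> \<in> \<Omega> \<Longrightarrow> t \<in> \<omega> \<Longrightarrow>
      \<exists>x\<in>\<omega>. mrank indep (insert x (I - {t})) = mrank indep (I - {t})"
  proof -
    fix I t \<omega> assume I: "transversal \<Omega> I" and t: "t \<in> I" "\<omega> \<in> \<Omega>" "t \<in> \<omega>"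
    have fI: "finite I" using trU[OF I] finS by blast
    have st: "subtransversal \<Omega> (I - {t})"
      unfolding subtransversal_def
    proof (intro conjI ballI)
      show "I - {t} \<subseteq> \<Union>\<Omega>" using trU[OF I] UU by auto
      fix \<omega>' assume "\<omega>' \<in> \<Omega>"
      then have "card (I \<inter> \<omega>') = 1" using I by (auto simp: transversal_def)
      moreover have "card ((I - {t}) \<inter> \<omega>') \<le> card (I \<inter> \<omega>')"
        by (rule card_mono) (use fI in auto)
      ultimately show "card ((I - {t}) \<inter> \<omega>') \<le> 1" by simp
    qed
    have "card (I - {t}) = card \<Omega> - 1" using trcard[OF I] t fI by simp
    moreover have "\<omega> \<inter> (I - {t}) = {}"
    proof -
      have "card (I \<inter> \<omega>) = 1" using I t by (auto simp: transversal_def)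
      then obtain z where z: "I \<inter> \<omega> = {z}" by (auto simp: card_1_singleton_iff)
      have "t \<in> I \<inter> \<omega>" using t by simp
      then have "t = z" using z by simp
      then show ?thesis using z by auto
    qed
    ultimately show "\<exists>x\<in>\<omega>. mrank indep (insert x (I - {t})) = mrank indep (I - {t})"
      using tight[OF st] t by blast
  qed
  obtain I0 where I0: "indep I0" "transversal \<Omega> I0"
  proof -
    let ?C = "{I. indep I \<and> subtransversal \<Omega> I}"
    have fC: "finite (card ` ?C)"
    proof -
      have "?C \<subseteq> Pow U" using indU by auto
      then show ?thesis using finU finite_subset by (metis finite_Pow_iff finite_imageI)
    qed
    have "{} \<in> ?C" using ind0 by (auto simp: subtransversal_def)
    then have "Max (card ` ?C) \<in> card ` ?C" using fC Max_in by blast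
    then obtain I where I: "indep I" "subtransversal \<Omega> I" "card I = Max (card ` ?C)" by auto
    have "\<forall>\<omega>\<in>\<Omega>. card (I \<inter> \<omega>) = 1"
    proof
      fix \<omega> assume w: "\<omega> \<in> \<Omega>"
      have le: "card (I \<inter> \<omega>) \<le> 1" using I w by (auto simp: subtransversal_def)
      have "I \<inter> \<omega> \<noteq> {}"
      proof
        assume e: "I \<inter> \<omega> = {}"
        have "card \<omega> = 2" using two w by auto
        then obtain x y where xy: "\<omega> = {x, y}" "x \<noteq> y" by (auto simp: card_2_iff)
        have "\<exists>z\<in>\<omega>. indep (insert z I)" using shel I w e xy by blast
        then obtain z where z: "z \<in> \<omega>" "indep (insert z I)" by blast
        have zI: "z \<notin> I" using z e by auto
        have "subtransversal \<Omega> (insert z I)"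
          unfolding subtransversal_def
        proof (intro conjI ballI)
          show "insert z I \<subseteq> \<Union>\<Omega>" using I z w by (auto simp: subtransversal_def)
          fix \<omega>' assume w': "\<omega>' \<in> \<Omega>"
          show "card (insert z I \<inter> \<omega>') \<le> 1"
          proof (cases "\<omega>' = \<omega>")
            case True then show ?thesis using e z by simp
          next
            case False
            then have "z \<notin> \<omega>'" using cls w w' z by blast
            then show ?thesis using I w' by (auto simp: subtransversal_def)
          qed
        qed
        then have "card (insert z I) \<in> card ` ?C" using z by blast
        then have "card (insert z I) \<le> card I" using I fC by simp
        moreover have "finite I" using I indU finS by blast
        ultimately show False using zI by simp
      qed
      then have "card (I \<inter> \<omega>) \<noteq> 0" using indU[OF I(1)] finS by auto
      then show "card (I \<inter> \<omega>) = 1" using le by simp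
    qed
    then have "transversal \<Omega> I" using I by (auto simp: subtransversal_def transversal_def)
    then show ?thesis using that I by blast
  qed
  have n: "card I0 = card \<Omega>" using trcard I0 by blast
  have fI0: "finite I0" using finS[OF indU[OF I0(1)]] .
  have bound: "\<And>J. indep J \<Longrightarrow> card J \<le> card \<Omega>"
  proof -
    fix J assume J1: "indep J"
    show "card J \<le> card \<Omega>"
    proof (rule ccontr)
    assume J2: "\<not> card J \<le> card \<Omega>"
    then have "card I0 < card J" using n by simp
    then obtain y where y: "y \<in> J - I0" "indep (insert y I0)" using aug[OF I0(1) J1] by blast
    have "J \<subseteq> U" by (rule indU[OF J1])
    then have "y \<in> U" using y(1) by blast
    then obtain \<omega> where w: "\<omega> \<in> \<Omega>" "y \<in> \<omega>" using UU by blast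
    have "card (I0 \<inter> \<omega>) = 1" using I0(2) w(1) by (simp add: transversal_def)
    then obtain t where t: "I0 \<inter> \<omega> = {t}" by (auto simp: card_1_singleton_iff)
    have tI0: "t \<in> I0" and tw: "t \<in> \<omega>" using t by blast+
    have ty: "t \<noteq> y" using tI0 y(1) by blast
    have wty: "\<omega> = {t, y}" by (rule pair[OF w(1) tw w(2) ty])
    have cS: "card (I0 - {t}) = card \<Omega> - 1" using tI0 n fI0 by simp
    have mS: "mrank indep (I0 - {t}) = card \<Omega> - 1"
      using mind[OF down[OF I0(1), of "I0 - {t}"]] cS by simp
    obtain x where x: "x \<in> \<omega>" "mrank indep (insert x (I0 - {t})) = mrank indep (I0 - {t})"
      using key[OF I0(2) tI0 w(1) tw] by blast
    have pos: "card \<Omega> > 0" using n tI0 fI0 by (metis card_gt_0_iff empty_iff)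
    show False
    proof (cases "x = t")
      case True
      then have "insert x (I0 - {t}) = I0" using tI0 by blast
      then show False using x(2) mS mind[OF I0(1)] n pos by simp
    next
      case False
      then have xy: "x = y" using x(1) wty by simp
      have sub: "insert y (I0 - {t}) \<subseteq> insert y I0" by blast
      have i: "indep (insert y (I0 - {t}))" by (rule down[OF y(2) sub])
      have yn: "y \<notin> I0 - {t}" using y(1) by blast
      have fS: "finite (I0 - {t})" using fI0 by simp
      have "card (insert y (I0 - {t})) = Suc (card (I0 - {t}))" by (rule card_insert_disjoint[OF fS yn])
      then have ci: "card (insert y (I0 - {t})) = card \<Omega>" using cS pos by simp
      have "mrank indep (insert x (I0 - {t})) = card \<Omega>" using mind[OF i] ci xy by simp
      then show False using x(2) xy mS mind[OF i] pos by simp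
    qed
    qed
  qed
  have P1: "mrank indep U = card \<Omega>"
  proof (rule antisym)
    show "mrank indep U \<le> card \<Omega>" by (rule mrank_le[where indep=indep, OF finU ind0]) (use bound in auto)
    show "card \<Omega> \<le> mrank indep U" using mrank_ge[where indep=indep, OF finU indU[OF I0(1)] I0(1)] n by simp
  qed
  show ?thesis
  proof (intro conjI P1 allI impI)
    fix B and A :: "'a \<Rightarrow> 'a \<Rightarrow> 'f"
    assume H: "mbasis U indep B \<and> transversal \<Omega> B \<and> represents B (std_matrix B A) U indep"
    have iB: "indep B" and tB: "transversal \<Omega> B" and rep: "\<And>X. X \<subseteq> U \<Longrightarrow> indep X \<longleftrightarrow> cols_indep B (std_matrix B A) X"
      using H by (auto simp: mbasis_def represents_def)
    have BU: "B \<subseteq> U" using indU iB by blast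
    have fB: "finite B" using BU finS by blast
    have nB: "card B = card \<Omega>" using trcard tB by blast
    have P2: "\<And>b t. b \<in> B \<Longrightarrow> t \<in> U - B \<Longrightarrow> {b, t} \<in> \<Omega> \<Longrightarrow> A b t = 0"
    proof -
      fix b t assume b: "b \<in> B" and t: "t \<in> U - B" and w: "{b, t} \<in> \<Omega>"
      show "A b t = 0"
      proof (rule ccontr)
      assume nz: "A b t \<noteq> 0"
      obtain x where x: "x \<in> {b, t}" "mrank indep (insert x (B - {b})) = mrank indep (B - {b})"
        using key[OF tB b w insertI1] by blast
      have iS: "indep (B - {b})" by (rule down[OF iB]) blast
      have mS: "mrank indep (B - {b}) = card \<Omega> - 1"
        using mind[OF iS] b nB fB by simp
      have "B \<noteq> {}" using b by blast
      then have pos: "card \<Omega> > 0" using fB nB card_gt_0_iff by metis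
      show False
      proof (cases "x = b")
        case True
        then have "insert x (B - {b}) = B" using b by auto
        then show False using x mS mind[OF iB] nB pos by simp
      next
        case False
        then have xt: "x = t" using x by auto
        have "cols_indep B (std_matrix B A) (insert t (B - {b}))"
          by (rule std_ind[OF fB _ _ b]) (use t nz in auto)
        moreover have sub: "insert t (B - {b}) \<subseteq> U" using t BU by blast
        ultimately have i: "indep (insert t (B - {b}))" using rep[OF sub] by blast
        have tn: "t \<notin> B - {b}" using t by blast
        have "card (insert t (B - {b})) = Suc (card (B - {b}))" using fB tn by simp
        then have "card (insert t (B - {b})) = card \<Omega>" using b nB fB pos by simp
        then show False using x xt mS mind[OF i] pos by simp
      qed
    qed
    qed
    show "\<forall>b\<in>B. \<forall>t\<in>U - B. {b, t} \<in> \<Omega> \<longrightarrow> A b t = 0" using P2 by blast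
    have P3: "\<And>b b' t t'. b \<in> B \<Longrightarrow> b' \<in> B \<Longrightarrow> t \<in> U - B \<Longrightarrow> t' \<in> U - B \<Longrightarrow>
       {b, t'} \<in> \<Omega> \<Longrightarrow> {b', t} \<in> \<Omega> \<Longrightarrow> b \<noteq> b' \<Longrightarrow> A b t \<noteq> 0 \<Longrightarrow> A b' t' \<noteq> 0"
    proof
      fix b b' t t'
      assume b: "b \<in> B" and b': "b' \<in> B" and t: "t \<in> U - B" and t': "t' \<in> U - B"
        and w1: "{b, t'} \<in> \<Omega>" and w2: "{b', t} \<in> \<Omega>" and bb: "b \<noteq> b'" and nz: "A b t \<noteq> 0"
        and z: "A b' t' = 0"
      have tt: "t \<noteq> t'"
      proof
        assume "t = t'"
        then have "{b, t'} = {b', t}" using cls w1 w2 by blast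
        then show False using bb b t by auto
      qed
      define I where "I = insert t' (B - {b})"
      have tI: "transversal \<Omega> I"
        unfolding transversal_def
      proof (intro conjI ballI)
        show "I \<subseteq> \<Union>\<Omega>" using BU t' UU by (auto simp: I_def)
        fix \<omega> assume w: "\<omega> \<in> \<Omega>"
        show "card (I \<inter> \<omega>) = 1"
        proof (cases "\<omega> = {b, t'}")
          case True
          have "card (B \<inter> \<omega>) = 1" using tB w by (auto simp: transversal_def)
          then have "I \<inter> \<omega> = {t'}" using True t' b by (auto simp: I_def)
          then show ?thesis by simp
        next
          case False
          then have "t' \<notin> \<omega>" "b \<notin> \<omega>" using cls[OF w w1] by auto
          then have "I \<inter> \<omega> = B \<inter> \<omega>" by (auto simp: I_def)
          then show ?thesis using tB w by (auto simp: transversal_def)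
        qed
      qed
      define S where "S = insert t' (B - {b, b'})"
      have SI: "I - {b'} = S" using t' b' by (auto simp: I_def S_def)
      have b'I: "b' \<in> I" using b' bb by (auto simp: I_def)
      obtain x where x: "x \<in> {b', t}" "mrank indep (insert x S) = mrank indep S"
        using key[OF tI b'I w2] SI by auto
      have SU: "S \<subseteq> U" using BU t' by (auto simp: S_def)
      have cS: "card S = card \<Omega> - 1"
      proof -
        have "card (B - {b, b'}) = card B - 2" using b b' bb fB by (simp add: card_Diff_subset)
        moreover have "card B \<ge> 2"
        proof -
          have "card {b, b'} \<le> card B" using b b' fB by (intro card_mono) auto
          then show ?thesis using bb by simp
        qed
        ultimately show ?thesis using t' fB nB by (auto simp: S_def)
      qed
      have "\<not> cols_indep B (std_matrix B A) S"
        unfolding S_def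
        by (rule std_dep[OF fB]) (use t' P2[OF b t' w1] z b b' in auto)
      then have "\<not> indep S" using rep SU by blast
      then have mS: "mrank indep S < card \<Omega> - 1"
        using mrank_dep[where indep=indep, OF finS[OF SU] ind0] cS by simp
      show False
      proof (cases "x = b'")
        case True
        have "B - {b} \<subseteq> insert x S" using True by (auto simp: S_def)
        moreover have "card (B - {b}) = card \<Omega> - 1" using b fB nB by simp
        moreover have "finite (insert x S)" using finS[OF SU] by simp
        moreover have "indep (B - {b})" by (rule down[OF iB]) blast
        ultimately have "card \<Omega> - 1 \<le> mrank indep (insert x S)"
          using mrank_ge[where indep=indep] by metis
        then show False using x mS by simp
      next
        case False
        then have xt: "x = t" using x by auto
        have "cols_indep B (std_matrix B A) (insert t (B - {b, b'}))"
          by (rule std_ind[OF fB _ _ b]) (use t nz in auto)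
        moreover have sub2: "insert t (B - {b, b'}) \<subseteq> U" using t BU by blast
        ultimately have i: "indep (insert t (B - {b, b'}))" using rep[OF sub2] by blast
        have "card (insert t (B - {b, b'})) = card S"
          using t t' fB by (simp add: S_def)
        moreover have "insert t (B - {b, b'}) \<subseteq> insert x S" using xt by (auto simp: S_def)
        moreover have "finite (insert x S)" using finS[OF SU] by simp
        ultimately have "card S \<le> mrank indep (insert x S)"
          using mrank_ge[where indep=indep] i by metis
        then show False using x mS cS by simp
      qed
    qed
    assume c2: "card (UNIV :: 'f set) = 2"
    have two_el: "\<And>v::'f. v \<noteq> 0 \<Longrightarrow> v = 1"
    proof -
      fix v :: 'f assume v: "v \<noteq> 0"
      have fU: "finite (UNIV :: 'f set)" using c2 card.infinite by fastforce
      have "card {0::'f, 1} = 2" by simp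
      then have "{0::'f, 1} = UNIV" using c2 fU by (metis card_subset_eq subset_UNIV)
      then show "v = 1" using v by auto
    qed
    show "\<forall>b\<in>B. \<forall>b'\<in>B. \<forall>t\<in>U - B. \<forall>t'\<in>U - B. {b, t'} \<in> \<Omega> \<and> {b', t} \<in> \<Omega> \<longrightarrow> A b t = A b' t'"
    proof (intro ballI impI)
      fix b b' t t' assume b: "b \<in> B" and b': "b' \<in> B" and t: "t \<in> U - B" and t': "t' \<in> U - B"
        and w: "{b, t'} \<in> \<Omega> \<and> {b', t} \<in> \<Omega>"
      show "A b t = A b' t'"
      proof (cases "b = b'")
        case True
        then have "{b, t'} = {b', t}" using cls w by blast
        then have "t = t'" using True b t by auto
        then show ?thesis using True by simp
      next
        case False
        have i1: "A b t \<noteq> 0 \<Longrightarrow> A b' t' \<noteq> 0" using P3[OF b b' t t'] w False by blast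
        have i2: "A b' t' \<noteq> 0 \<Longrightarrow> A b t \<noteq> 0" using P3[OF b' b t' t] w False by blast
        show ?thesis
        proof (cases "A b t = 0")
          case True then show ?thesis using i2 by auto
        next
          case False then show ?thesis using i1 two_el by metis
        qed
      qed
    qed
  qed
qed

end
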